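(* For all integers $n>1$, $$c_{\mathbb{Z}^2}(n)=c_{TS}(n,2)=c_{LS}(n,2)=\lfloor 2n-2\sqrt{n}\rfloor .$$
   Context: A packing of disks in $\mathbb{E}^2$ is a family of disks with pairwise disjoint interiors. A packing is totally separable (a TS-packing) if any two of its disks can be separated by a line disjoint from the interior of every disk of the packing. A packing $\mathcal{P}$ is locally separable (an LS-packing) if each disk of $\mathcal{P}$ together with the disks of $\mathcal{P}$ tangent to it form a TS-packing. The contact number $c(\mathcal{P})$ is the number of unordered pairs of tangent disks of $\mathcal{P}$. $c_{TS}(n,2)$ (resp. $c_{LS}(n,2)$) denotes the largest contact number of a TS-packing (resp. LS-packing) of $n$ congruent disks in $\mathbb{E}^2$. $c_{\mathbb{Z}^2}(n)$ denotes the largest contact number of a packing of $n$ disks of diameter $1$ whose centers are distinct points of the integer lattice $\mathbb{Z}^2$. *)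

theory Defs
  imports "HOL-Analysis.Analysis"
begin

text \<open>A family of congruent disks in the plane is given by a set C of centers
  and a common radius r > 0; the disks are the closed balls cball c r.
  Distinct disks have distinct centers (disjoint interiors forces this).\<close>

type_synonym pt = "real ^ 2"

definition disk_packing :: "pt set \<Rightarrow> real \<Rightarrow> bool" where
  "disk_packing C r \<longleftrightarrow> r > 0 \<and>
     (\<forall>c\<in>C. \<forall>d\<in>C. c \<noteq> d \<longrightarrow> ball c r \<inter> ball d r = {})"

definition tangent :: "real \<Rightarrow> pt \<Rightarrow> pt \<Rightarrow> bool" where
  "tangent r c d \<longleftrightarrow> c \<noteq> d \<and> dist c d = 2 * r"

definition totally_separable :: "pt set \<Rightarrow> real \<Rightarrow> bool" where
  "totally_separable C r \<longleftrightarrow> disk_packing C r \<and>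
     (\<forall>c\<in>C. \<forall>d\<in>C. c \<noteq> d \<longrightarrow>
        (\<exists>a b. a \<noteq> 0 \<and>
           (\<forall>x\<in>cball c r. a \<bullet> x \<le> b) \<and> (\<forall>x\<in>cball d r. a \<bullet> x \<ge> b) \<and>
           (\<forall>e\<in>C. ball e r \<inter> {x. a \<bullet> x = b} = {})))"

definition locally_separable :: "pt set \<Rightarrow> real \<Rightarrow> bool" where
  "locally_separable C r \<longleftrightarrow> disk_packing C r \<and>
     (\<forall>c\<in>C. totally_separable (insert c {d\<in>C. tangent r c d}) r)"

definition contact_number :: "pt set \<Rightarrow> real \<Rightarrow> nat" where
  "contact_number C r = card {{c, d} | c d. c \<in> C \<and> d \<in> C \<and> tangent r c d}"

definition c_TS :: "nat \<Rightarrow> nat" where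
  "c_TS n = Max {contact_number C r | C r. finite C \<and> card C = n \<and> totally_separable C r}"

definition c_LS :: "nat \<Rightarrow> nat" where
  "c_LS n = Max {contact_number C r | C r. finite C \<and> card C = n \<and> locally_separable C r}"

definition c_Z2 :: "nat \<Rightarrow> nat" where
  "c_Z2 n = Max {contact_number C (1/2) | C. finite C \<and> card C = n \<and>
      disk_packing C (1/2) \<and> (\<forall>c\<in>C. c $ 1 \<in> \<int> \<and> c $ 2 \<in> \<int>)}"

end

theory Submission
  imports Defs
begin


locale chainsys =
  fixes C :: "'a set" and R :: "'a \<Rightarrow> 'a \<Rightarrow> bool" and X Y :: "'a \<Rightarrow> real"
  assumes fin: "finite C"
    and RC: "R v w \<Longrightarrow> v \<in> C \<and> w \<in> C"
    and Rfun: "R v w1 \<Longrightarrow> R v w2 \<Longrightarrow> w1 = w2"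
    and Rinj: "R v1 w \<Longrightarrow> R v2 w \<Longrightarrow> v1 = v2"
    and Rmono: "R v w \<Longrightarrow> X v < X w \<and> Y v \<le> Y w"
begin

definition f :: "'a \<Rightarrow> 'a" where
  "f v = (if \<exists>w. R v w then THE w. R v w else v)"

definition snk :: "'a \<Rightarrow> 'a" where
  "snk v = (f ^^ card C) v"

lemma f_R: "R v w \<Longrightarrow> f v = w"
proof -
  assume r: "R v w"
  have "(THE w. R v w) = w" using r Rfun by (intro the_equality) auto
  then show ?thesis using r unfolding f_def by auto
qed

lemma f_sink: "\<not> (\<exists>w. R v w) \<Longrightarrow> f v = v"
  unfolding f_def by auto

lemma f_nonsink: "\<exists>w. R v w \<Longrightarrow> R v (f v)"
  using f_R by blast

lemma f_C: "v \<in> C \<Longrightarrow> f v \<in> C"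
  by (cases "\<exists>w. R v w") (use RC f_nonsink f_sink in auto)

lemma f_mono: "X v \<le> X (f v) \<and> Y v \<le> Y (f v) \<and> (f v \<noteq> v \<longrightarrow> X v < X (f v))"
proof (cases "\<exists>w. R v w")
  case True then show ?thesis using Rmono[OF f_nonsink[OF True]] by auto
next
  case False then show ?thesis using f_sink by auto
qed

lemma fpow_C: "v \<in> C \<Longrightarrow> (f ^^ k) v \<in> C"
  by (induction k) (auto simp: f_C)

lemma fpow_mono: "X v \<le> X ((f ^^ k) v) \<and> Y v \<le> Y ((f ^^ k) v) \<and>
   ((f ^^ k) v \<noteq> v \<longrightarrow> X v < X ((f ^^ k) v))"
proof (induction k)
  case 0 then show ?case by simp
next
  case (Suc k)
  have m: "X ((f ^^ k) v) \<le> X (f ((f ^^ k) v)) \<and> Y ((f ^^ k) v) \<le> Y (f ((f ^^ k) v)) \<and>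
     (f ((f ^^ k) v) \<noteq> (f ^^ k) v \<longrightarrow> X ((f ^^ k) v) < X (f ((f ^^ k) v)))"
    by (rule f_mono)
  show ?case using Suc m by (cases "(f ^^ k) v = v") auto
qed

lemma sink_stays: "\<not> (\<exists>w. R ((f ^^ i) v) w) \<Longrightarrow> i \<le> j \<Longrightarrow> (f ^^ j) v = (f ^^ i) v"
proof (induction j)
  case 0 then show ?case by simp
next
  case (Suc j)
  show ?case
  proof (cases "i = Suc j")
    case True then show ?thesis by simp
  next
    case False
    then have "i \<le> j" using Suc by simp
    then have "(f ^^ j) v = (f ^^ i) v" using Suc by simp
    then show ?thesis using Suc(2) f_sink by simp
  qed
qed

lemma nonsink_before: "\<exists>w. R ((f ^^ k) v) w \<Longrightarrow> i \<le> k \<Longrightarrow> \<exists>w. R ((f ^^ i) v) w"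
proof (rule ccontr)
  assume a: "\<exists>w. R ((f ^^ k) v) w" "i \<le> k" "\<not> (\<exists>w. R ((f ^^ i) v) w)"
  then have "(f ^^ k) v = (f ^^ i) v" using sink_stays by blast
  then show False using a by simp
qed

lemma strict_step: "\<exists>w. R ((f ^^ k) v) w \<Longrightarrow> i < k \<Longrightarrow> X ((f ^^ i) v) < X ((f ^^ Suc i) v)"
  using nonsink_before[of k v i] Rmono f_nonsink by auto

lemma strict_chain: "\<exists>w. R ((f ^^ k) v) w \<Longrightarrow> i < j \<Longrightarrow> j \<le> k \<Longrightarrow> X ((f ^^ i) v) < X ((f ^^ j) v)"
proof (induction j)
  case 0 then show ?case by simp
next
  case (Suc j)
  have s: "X ((f ^^ j) v) < X ((f ^^ Suc j) v)"
    using strict_step[of k v j] Suc by simp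
  show ?case
  proof (cases "i = j")
    case True then show ?thesis using s by simp
  next
    case False then show ?thesis using Suc s by simp
  qed
qed

lemma snk_sink: assumes "v \<in> C" shows "snk v \<in> C" "\<not> (\<exists>w. R (snk v) w)"
proof -
  show "snk v \<in> C" unfolding snk_def using fpow_C assms by blast
  show "\<not> (\<exists>w. R (snk v) w)"
  proof
    assume ns: "\<exists>w. R (snk v) w"
    let ?g = "\<lambda>i. (f ^^ i) v"
    have inj: "inj_on ?g {0..card C}"
    proof (rule inj_onI)
      fix i j assume ij: "i \<in> {0..card C}" "j \<in> {0..card C}" "?g i = ?g j"
      show "i = j"
      proof (rule ccontr)
        assume "i \<noteq> j"
        then consider "i < j" | "j < i" by linarith
        then show False
          using strict_chain[of "card C" v] ns ij unfolding snk_def by (cases; force)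
      qed
    qed
    have "?g ` {0..card C} \<subseteq> C" using fpow_C assms by blast
    then have "card {0..card C} \<le> card C" using card_inj_on_le[OF inj _ fin] by blast
    then show False by simp
  qed
qed

lemma common_iter:
  "(f ^^ i) v = (f ^^ j) w \<Longrightarrow> (\<exists>k. (f ^^ k) v = w) \<or> (\<exists>k. (f ^^ k) w = v)"
proof (induction "i + j" arbitrary: i j rule: less_induct)
  case less
  show ?case
  proof (cases i)
    case 0 then show ?thesis using less by auto
  next
    case (Suc i')
    show ?thesis
    proof (cases j)
      case 0 then have "(f ^^ i) v = w" using less(2) by simp
      then show ?thesis by blast
    next
      case (Suc j')
      let ?a = "(f ^^ i') v" and ?b = "(f ^^ j') w"
      have e: "f ?a = f ?b" using less(2) \<open>i = Suc i'\<close> Suc by simp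
      show ?thesis
      proof (cases "?a = ?b")
        case True then show ?thesis using less(1)[of i' j'] \<open>i = Suc i'\<close> Suc by simp
      next
        case False
        have "\<not> (\<exists>w. R ?a w) \<or> \<not> (\<exists>w. R ?b w)"
        proof (rule ccontr)
          assume "\<not> (\<not> (\<exists>w. R ?a w) \<or> \<not> (\<exists>w. R ?b w))"
          then have r1: "R ?a (f ?a)" and r2: "R ?b (f ?b)" using f_nonsink by auto
          from r2 e have r3: "R ?b (f ?a)" by simp
          from Rinj[OF r1 r3] False show False by simp
        qed
        then show ?thesis
        proof
          assume "\<not> (\<exists>w. R ?a w)"
          then have "?a = (f ^^ Suc j') w" using e f_sink by simp
          then show ?thesis using less(1)[of i' "Suc j'"] \<open>i = Suc i'\<close> Suc by simp
        next
          assume "\<not> (\<exists>w. R ?b w)"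
          then have "(f ^^ Suc i') v = ?b" using e f_sink by simp
          then show ?thesis using less(1)[of "Suc i'" j'] \<open>i = Suc i'\<close> Suc by simp
        qed
      qed
    qed
  qed
qed

lemma snk_eq:
  assumes "snk v = snk w" "v \<noteq> w"
  shows "(X v < X w \<and> Y v \<le> Y w) \<or> (X w < X v \<and> Y w \<le> Y v)"
proof -
  from common_iter[of "card C" v "card C" w] assms(1) have
    "(\<exists>k. (f ^^ k) v = w) \<or> (\<exists>k. (f ^^ k) w = v)" unfolding snk_def by simp
  then show ?thesis
  proof
    assume "\<exists>k. (f ^^ k) v = w"
    then obtain k where "(f ^^ k) v = w" by blast
    then show ?thesis using fpow_mono[of v k] assms(2) by auto
  next
    assume "\<exists>k. (f ^^ k) w = v"
    then obtain k where "(f ^^ k) w = v" by blast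
    then show ?thesis using fpow_mono[of w k] assms(2) by auto
  qed
qed

lemma edges_card:
  "card {{v, w} | v w. R v w} = card {v \<in> C. \<exists>w. R v w}"
proof -
  let ?N = "{v \<in> C. \<exists>w. R v w}"
  have eq: "{{v, w} | v w. R v w} = (\<lambda>v. {v, f v}) ` ?N"
  proof
    show "{{v, w} | v w. R v w} \<subseteq> (\<lambda>v. {v, f v}) ` ?N"
      using f_R RC by blast
    show "(\<lambda>v. {v, f v}) ` ?N \<subseteq> {{v, w} | v w. R v w}"
      using f_nonsink by blast
  qed
  have "inj_on (\<lambda>v. {v, f v}) ?N"
  proof (rule inj_onI)
    fix v v' assume a: "v \<in> ?N" "v' \<in> ?N" "{v, f v} = {v', f v'}"
    show "v = v'"
    proof (rule ccontr)
      assume "v \<noteq> v'"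
      then have "v = f v'" "v' = f v" using a(3) by (auto simp: doubleton_eq_iff)
      moreover have "X v < X (f v)" "X v' < X (f v')"
        using a f_nonsink Rmono by blast+
      ultimately show False by simp
    qed
  qed
  then show ?thesis using eq card_image by simp
qed

end

lemma inner2: "(x::pt) \<bullet> y = x$1 * y$1 + x$2 * y$2"
  by (simp add: inner_vec_def sum_2)

lemma tangent_sym: "tangent r c d \<Longrightarrow> tangent r d c"
  by (auto simp: tangent_def dist_commute)

lemma upper_core:
  fixes C :: "pt set" and r :: real
  assumes fin: "finite C"
    and ang: "\<And>c d1 d2. c \<in> C \<Longrightarrow> d1 \<in> C \<Longrightarrow> d2 \<in> C \<Longrightarrow> tangent r c d1 \<Longrightarrow>
                 tangent r c d2 \<Longrightarrow> d1 \<noteq> d2 \<Longrightarrow> (d1 - c) \<bullet> (d2 - c) \<le> 0"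
  shows "real (contact_number C r) \<le> 2 * real (card C) - 2 * sqrt (real (card C))"
proof -
  define RA where "RA v w \<longleftrightarrow> v \<in> C \<and> w \<in> C \<and> tangent r v w \<and> (w - v)$1 > 0 \<and> (w - v)$2 \<ge> 0" for v w
  define RB where "RB v w \<longleftrightarrow> v \<in> C \<and> w \<in> C \<and> tangent r v w \<and> (w - v)$2 > 0 \<and> (w - v)$1 \<le> 0" for v w
  have posA: "(a::real) > 0 \<Longrightarrow> b \<ge> 0 \<Longrightarrow> c > 0 \<Longrightarrow> d \<ge> 0 \<Longrightarrow> a * c + b * d > 0" for a b c d
    by (simp add: add_pos_nonneg)
  have posB: "(a::real) > 0 \<Longrightarrow> b \<le> 0 \<Longrightarrow> c > 0 \<Longrightarrow> d \<le> 0 \<Longrightarrow> b * d + a * c > 0" for a b c d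
    by (simp add: add_nonneg_pos mult_nonpos_nonpos)
  interpret A: chainsys C RA "\<lambda>v. v$1" "\<lambda>v. v$2"
  proof
    show "finite C" by (rule fin)
    show "RA v w \<Longrightarrow> v \<in> C \<and> w \<in> C" for v w by (simp add: RA_def)
    show "RA v w \<Longrightarrow> v$1 < w$1 \<and> v$2 \<le> w$2" for v w by (simp add: RA_def)
    show "w1 = w2" if "RA v w1" "RA v w2" for v w1 w2
    proof (rule ccontr)
      assume "w1 \<noteq> w2"
      then have "(w1 - v) \<bullet> (w2 - v) \<le> 0" using that ang unfolding RA_def by blast
      moreover have "(w1 - v) \<bullet> (w2 - v) > 0" unfolding inner2
        using that posA unfolding RA_def by simp
      ultimately show False by simp
    qed
    show "v1 = v2" if "RA v1 w" "RA v2 w" for v1 v2 w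
    proof (rule ccontr)
      assume "v1 \<noteq> v2"
      then have "(v1 - w) \<bullet> (v2 - w) \<le> 0" using that ang tangent_sym unfolding RA_def by blast
      moreover have "(v1 - w) \<bullet> (v2 - w) > 0" unfolding inner2
        using that posA[of "w$1 - v1$1" "w$2 - v1$2" "w$1 - v2$1" "w$2 - v2$2"] unfolding RA_def
        by (simp add: algebra_simps)
      ultimately show False by simp
    qed
  qed
  interpret B: chainsys C RB "\<lambda>v. v$2" "\<lambda>v. - v$1"
  proof
    show "finite C" by (rule fin)
    show "RB v w \<Longrightarrow> v \<in> C \<and> w \<in> C" for v w by (simp add: RB_def)
    show "RB v w \<Longrightarrow> v$2 < w$2 \<and> - v$1 \<le> - w$1" for v w by (simp add: RB_def)
    show "w1 = w2" if "RB v w1" "RB v w2" for v w1 w2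
    proof (rule ccontr)
      assume "w1 \<noteq> w2"
      then have "(w1 - v) \<bullet> (w2 - v) \<le> 0" using that ang unfolding RB_def by blast
      moreover have "(w1 - v) \<bullet> (w2 - v) > 0" unfolding inner2
        using that posB unfolding RB_def by simp
      ultimately show False by simp
    qed
    show "v1 = v2" if "RB v1 w" "RB v2 w" for v1 v2 w
    proof (rule ccontr)
      assume "v1 \<noteq> v2"
      then have "(v1 - w) \<bullet> (v2 - w) \<le> 0" using that ang tangent_sym unfolding RB_def by blast
      moreover have "(v1 - w) \<bullet> (v2 - w) > 0" unfolding inner2
        using that posB[of "w$2 - v1$2" "w$1 - v1$1" "w$2 - v2$2" "w$1 - v2$1"] unfolding RB_def
        by (simp add: algebra_simps)
      ultimately show False by simp
    qed
  qed
  define T where "T = {{c, d} | c d. c \<in> C \<and> d \<in> C \<and> tangent r c d}"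
  define TA where "TA = {{v, w} | v w. RA v w}"
  define TB where "TB = {{v, w} | v w. RB v w}"
  have TU: "T = TA \<union> TB"
  proof
    show "TA \<union> TB \<subseteq> T" unfolding T_def TA_def TB_def RA_def RB_def by blast
    show "T \<subseteq> TA \<union> TB"
    proof
      fix e assume "e \<in> T"
      then obtain c d where e: "e = {c, d}" "c \<in> C" "d \<in> C" "tangent r c d" unfolding T_def by blast
      have "c \<noteq> d" using e(4) by (simp add: tangent_def)
      then have ne: "(d - c)$1 \<noteq> 0 \<or> (d - c)$2 \<noteq> 0" by (auto simp: vec_eq_iff forall_2)
      have tdc: "tangent r d c" using e(4) by (rule tangent_sym)
      have ed: "e = {d, c}" using e(1) by auto
      have "RA c d \<or> RA d c \<or> RB c d \<or> RB d c"
        using ne e tdc unfolding RA_def RB_def by auto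
      then show "e \<in> TA \<union> TB" unfolding TA_def TB_def using e(1) ed by blast
    qed
  qed
  have disj: "TA \<inter> TB = {}"
  proof -
    have False if "RA v w" "RB v' w'" "{v, w} = {v', w'}" for v w v' w'
      using that unfolding RA_def RB_def doubleton_eq_iff by auto
    then show ?thesis unfolding TA_def TB_def by blast
  qed
  have finT: "finite T"
  proof -
    have "T \<subseteq> (\<lambda>(c, d). {c, d}) ` (C \<times> C)" unfolding T_def by auto
    then show ?thesis using fin finite_subset by blast
  qed
  define SA where "SA = {v \<in> C. \<not> (\<exists>w. RA v w)}"
  define SB where "SB = {v \<in> C. \<not> (\<exists>w. RB v w)}"
  have cA: "card TA + card SA = card C"
  proof -
    have "card TA = card {v \<in> C. \<exists>w. RA v w}" unfolding TA_def by (rule A.edges_card)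
    moreover have "card {v \<in> C. \<exists>w. RA v w} + card SA = card C"
    proof -
      have e: "{v \<in> C. \<exists>w. RA v w} \<union> SA = C" unfolding SA_def by auto
      have "card ({v \<in> C. \<exists>w. RA v w} \<union> SA) = card {v \<in> C. \<exists>w. RA v w} + card SA"
        by (rule card_Un_disjoint) (auto simp: fin SA_def)
      then show ?thesis using e by simp
    qed 
    ultimately show ?thesis by simp
  qed
  have cB: "card TB + card SB = card C"
  proof -
    have "card TB = card {v \<in> C. \<exists>w. RB v w}" unfolding TB_def by (rule B.edges_card)
    moreover have "card {v \<in> C. \<exists>w. RB v w} + card SB = card C"
    proof -
      have e: "{v \<in> C. \<exists>w. RB v w} \<union> SB = C" unfolding SB_def by auto
      have "card ({v \<in> C. \<exists>w. RB v w} \<union> SB) = card {v \<in> C. \<exists>w. RB v w} + card SB"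
        by (rule card_Un_disjoint) (auto simp: fin SB_def)
      then show ?thesis using e by simp
    qed
    ultimately show ?thesis by simp
  qed
  have cT: "card T = card TA + card TB"
    using TU disj finT by (simp add: card_Un_disjoint)
  have prod: "card C \<le> card SA * card SB"
  proof -
    have inj: "inj_on (\<lambda>v. (A.snk v, B.snk v)) C"
    proof (rule inj_onI)
      fix v w assume vw: "v \<in> C" "w \<in> C" "(A.snk v, B.snk v) = (A.snk w, B.snk w)"
      show "v = w"
      proof (rule ccontr)
        assume "v \<noteq> w"
        then have h1: "(v$1 < w$1 \<and> v$2 \<le> w$2) \<or> (w$1 < v$1 \<and> w$2 \<le> v$2)"
          and h2: "(v$2 < w$2 \<and> - v$1 \<le> - w$1) \<or> (w$2 < v$2 \<and> - w$1 \<le> - v$1)"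
          using A.snk_eq B.snk_eq vw(3) by auto
        then show False by linarith
      qed
    qed
    have "(\<lambda>v. (A.snk v, B.snk v)) ` C \<subseteq> SA \<times> SB"
      unfolding SA_def SB_def using A.snk_sink B.snk_sink by auto
    moreover have "finite (SA \<times> SB)" unfolding SA_def SB_def using fin by simp
    ultimately have "card C \<le> card (SA \<times> SB)" using card_inj_on_le[OF inj] by blast
    then show ?thesis by (simp add: card_cartesian_product)
  qed
  have eqT: "real (card T) = 2 * real (card C) - real (card SA) - real (card SB)"
    using cA cB cT by linarith
  have "4 * real (card C) \<le> (real (card SA) + real (card SB))^2"
  proof -
    have "4 * real (card C) \<le> 4 * (real (card SA) * real (card SB))"
      using prod by (simp add: of_nat_mult[symmetric] del: of_nat_mult)
    also have "\<dots> \<le> (real (card SA) + real (card SB))^2"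
      using sum_squares_ge_zero[of "real (card SA) - real (card SB)" 0]
      by (simp add: power2_eq_square algebra_simps)
    finally show ?thesis .
  qed
  then have "sqrt (4 * real (card C)) \<le> real (card SA) + real (card SB)"
    by (simp add: real_le_lsqrt real_sqrt_le_iff sqrt_le_D)
  moreover have "sqrt (4 * real (card C)) = 2 * sqrt (real (card C))"
    by (simp add: real_sqrt_mult)
  ultimately show ?thesis using eqT unfolding contact_number_def T_def[symmetric] by linarith
qed

lemma pack_dist:
  assumes "disk_packing C r" "c \<in> C" "d \<in> C" "c \<noteq> d"
  shows "dist c d \<ge> 2 * r"
proof (rule ccontr)
  assume "\<not> dist c d \<ge> 2 * r"
  then have lt: "dist c d < 2 * r" by simp
  define z where "z = midpoint c d"
  have "dist c z < r" "dist d z < r" using lt unfolding z_def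
    by (simp_all add: dist_midpoint)
  then have "z \<in> ball c r \<inter> ball d r" by simp
  then show False using assms unfolding disk_packing_def by blast
qed

lemma ls_angle:
  assumes LS: "locally_separable C r" and cC: "c \<in> C" and d1C: "d1 \<in> C" and d2C: "d2 \<in> C"
    and t1: "tangent r c d1" and t2: "tangent r c d2" and ne: "d1 \<noteq> d2"
  shows "(d1 - c) \<bullet> (d2 - c) \<le> 0"
proof -
  have pack: "disk_packing C r" using LS unfolding locally_separable_def by blast
  then have rpos: "r > 0" unfolding disk_packing_def by blast
  define D where "D = insert c {d \<in> C. tangent r c d}"
  have TS: "totally_separable D r" using LS cC unfolding locally_separable_def D_def by blast
  have cD: "c \<in> D" and d1D: "d1 \<in> D" and d2D: "d2 \<in> D" using d1C d2C t1 t2 unfolding D_def by auto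
  have cd1: "c \<noteq> d1" using t1 unfolding tangent_def by blast
  obtain a b where anz: "a \<noteq> 0" and H1: "\<forall>x\<in>cball c r. a \<bullet> x \<le> b"
    and H2: "\<forall>x\<in>cball d1 r. a \<bullet> x \<ge> b" and H3: "ball d2 r \<inter> {x. a \<bullet> x = b} = {}"
    using TS cD d1D cd1 d2D unfolding totally_separable_def by blast
  define u where "u = d1 - c"
  define w where "w = d2 - c"
  have d1u: "d1 = c + u" and d2w: "d2 = c + w" unfolding u_def w_def by simp_all
  have nu: "norm u = 2 * r" using t1 unfolding tangent_def u_def by (simp add: dist_norm norm_minus_commute)
  have nw: "norm w = 2 * r" using t2 unfolding tangent_def w_def by (simp add: dist_norm norm_minus_commute)
  have uu: "u \<bullet> u = 4 * r^2" using nu by (simp add: power2_norm_eq_inner[symmetric] power_mult_distrib)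
  have ww: "w \<bullet> w = 4 * r^2" using nw by (simp add: power2_norm_eq_inner[symmetric] power_mult_distrib)
  define m where "m = c + (1/2) *\<^sub>R u"
  have "m \<in> cball c r" unfolding m_def using nu rpos by (simp add: dist_norm)
  moreover have "m \<in> cball d1 r"
  proof -
    have "u - (1/2) *\<^sub>R u = (1 - 1/2) *\<^sub>R u" by (simp only: scaleR_left_diff_distrib scaleR_one)
    then have "d1 - m = (1/2) *\<^sub>R u" unfolding m_def d1u by simp
    then show ?thesis using nu rpos by (simp add: dist_norm)
  qed
  ultimately have "a \<bullet> m \<le> b" "a \<bullet> m \<ge> b" using H1 H2 by blast+
  then have bm: "b = a \<bullet> m" by simp
  define p where "p = c + (r / norm a) *\<^sub>R a"
  have "p \<in> cball c r" unfolding p_def using rpos anz by (simp add: dist_norm)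
  then have "a \<bullet> p \<le> b" using H1 by blast
  moreover have "a \<bullet> p = a \<bullet> c + r * norm a"
    unfolding p_def using anz by (simp add: inner_add_right power2_norm_eq_inner[symmetric] power2_eq_square)
  ultimately have "r * norm a \<le> (1/2) * (a \<bullet> u)" unfolding bm m_def by (simp add: inner_add_right)
  then have ge: "a \<bullet> u \<ge> norm a * norm u" using nu by (simp add: algebra_simps)
  have "a \<bullet> u \<le> norm a * norm u" by (rule norm_cauchy_schwarz)
  then have "a \<bullet> u = norm a * norm u" using ge by simp
  then have "norm a *\<^sub>R u = norm u *\<^sub>R a" by (simp add: norm_cauchy_schwarz_eq)
  then have "norm a *\<^sub>R u = (2 * r) *\<^sub>R a" using nu by simp
  then have "(1 / (2 * r)) *\<^sub>R (norm a *\<^sub>R u) = a" using rpos by simp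
  then have aku: "a = (norm a / (2 * r)) *\<^sub>R u" by simp
  define k where "k = norm a / (2 * r)"
  have kpos: "k > 0" unfolding k_def using anz rpos by simp
  have aku': "a = k *\<^sub>R u" using aku unfolding k_def .
  have "dist d1 d2 \<ge> 2 * r" using pack_dist[OF pack d1C d2C ne] .
  then have "norm (u - w) \<ge> 2 * r" unfolding d1u d2w by (simp add: dist_norm)
  then have "(norm (u - w))^2 \<ge> (2 * r)^2" using rpos by (intro power_mono) auto
  then have "(u - w) \<bullet> (u - w) \<ge> 4 * r^2" by (simp add: power2_norm_eq_inner power_mult_distrib)
  then have uw: "u \<bullet> w \<le> 2 * r^2" using uu ww by (simp add: inner_diff_left inner_diff_right inner_commute)
  show ?thesis
  proof (rule ccontr)
    assume "\<not> (d1 - c) \<bullet> (d2 - c) \<le> 0"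
    then have uwp: "u \<bullet> w > 0" unfolding u_def w_def by simp
    define s where "s = (2 * r^2 - u \<bullet> w) / (4 * r^2)"
    have s0: "s \<ge> 0" unfolding s_def using uw by simp
    have s1: "s < 1/2" unfolding s_def using uwp rpos by (simp add: field_simps)
    define q where "q = d2 + s *\<^sub>R u"
    have "dist d2 q = s * (2 * r)" unfolding q_def using s0 nu by (simp add: dist_norm)
    also have "\<dots> < r" using s1 rpos by simp
    finally have qb: "q \<in> ball d2 r" by simp
    have "u \<bullet> q = u \<bullet> c + u \<bullet> w + s * (4 * r^2)"
      unfolding q_def d2w using uu by (simp add: inner_add_right)
    also have "\<dots> = u \<bullet> c + 2 * r^2" unfolding s_def using rpos by (simp add: field_simps)
    also have "\<dots> = u \<bullet> m" unfolding m_def using uu by (simp add: inner_add_right)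
    finally have "a \<bullet> q = b" unfolding bm aku' by simp
    then show False using qb H3 by blast
  qed
qed

lemma TS_subset:
  assumes TS: "totally_separable C r" and sub: "D \<subseteq> C"
  shows "totally_separable D r"
proof -
  have P: "disk_packing C r" and H: "\<forall>c\<in>C. \<forall>d\<in>C. c \<noteq> d \<longrightarrow>
        (\<exists>a b. a \<noteq> 0 \<and>
           (\<forall>x\<in>cball c r. a \<bullet> x \<le> b) \<and> (\<forall>x\<in>cball d r. a \<bullet> x \<ge> b) \<and>
           (\<forall>e\<in>C. ball e r \<inter> {x. a \<bullet> x = b} = {}))"
    using TS unfolding totally_separable_def by auto
  have PD: "disk_packing D r"
    using P sub unfolding disk_packing_def by (meson subsetD)
  have HD: "\<forall>c\<in>D. \<forall>d\<in>D. c \<noteq> d \<longrightarrow>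
        (\<exists>a b. a \<noteq> 0 \<and>
           (\<forall>x\<in>cball c r. a \<bullet> x \<le> b) \<and> (\<forall>x\<in>cball d r. a \<bullet> x \<ge> b) \<and>
           (\<forall>e\<in>D. ball e r \<inter> {x. a \<bullet> x = b} = {}))"
  proof (intro ballI impI)
    fix c d assume cd: "c \<in> D" "d \<in> D" "c \<noteq> d"
    then have "c \<in> C" "d \<in> C" using sub by auto
    with H cd(3) obtain a b where ab: "a \<noteq> 0" "\<forall>x\<in>cball c r. a \<bullet> x \<le> b" "\<forall>x\<in>cball d r. a \<bullet> x \<ge> b"
          "\<forall>e\<in>C. ball e r \<inter> {x. a \<bullet> x = b} = {}"
      by meson
    have "\<forall>e\<in>D. ball e r \<inter> {x. a \<bullet> x = b} = {}" using ab(4) sub by (meson subsetD)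
    with ab(1-3) show "\<exists>a b. a \<noteq> 0 \<and>
           (\<forall>x\<in>cball c r. a \<bullet> x \<le> b) \<and> (\<forall>x\<in>cball d r. a \<bullet> x \<ge> b) \<and>
           (\<forall>e\<in>D. ball e r \<inter> {x. a \<bullet> x = b} = {})" by meson
  qed
  show ?thesis unfolding totally_separable_def using PD HD by (rule conjI)
qed

lemma ts_ls: assumes "totally_separable C r" shows "locally_separable C r"
proof -
  have pack: "disk_packing C r" using assms unfolding totally_separable_def by simp
  have "\<forall>c\<in>C. totally_separable (insert c {d \<in> C. tangent r c d}) r"
  proof
    fix c assume "c \<in> C"
    then have "insert c {d \<in> C. tangent r c d} \<subseteq> C" by auto
    then show "totally_separable (insert c {d \<in> C. tangent r c d}) r" by (rule TS_subset[OF assms])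
  qed
  then show ?thesis using pack unfolding locally_separable_def by simp
qed

lemma ls_upper:
  assumes "locally_separable C r" "finite C"
  shows "real (contact_number C r) \<le> 2 * real (card C) - 2 * sqrt (real (card C))"
  by (rule upper_core[OF assms(2)]) (rule ls_angle[OF assms(1)])



lemma norm2: "norm (x::pt) = sqrt ((x$1)^2 + (x$2)^2)"
  by (simp add: norm_eq_sqrt_inner inner2 power2_eq_square)

lemma ints_gap: "(x::real) \<in> \<int> \<Longrightarrow> y \<in> \<int> \<Longrightarrow> x < y \<Longrightarrow> x + 1 \<le> y"
proof -
  assume a: "x \<in> \<int>" "y \<in> \<int>" "x < y"
  from a(1) obtain m where m: "x = of_int m" by (auto elim: Ints_cases)
  from a(2) obtain n where n: "y = of_int n" by (auto elim: Ints_cases)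
  have "m < n" using a(3) m n by simp
  then have "m + 1 \<le> n" by simp
  then have "real_of_int (m + 1) \<le> real_of_int n" by (simp only: of_int_le_iff)
  then show ?thesis using m n by simp
qed

lemma lattice_ts:
  assumes L: "\<forall>c\<in>C. c $ 1 \<in> \<int> \<and> c $ 2 \<in> \<int>"
  shows "totally_separable C (1/2)"
proof -
  have LI: "c $ i \<in> \<int>" if "c \<in> C" for c i
  proof -
    have "i = 1 \<or> i = 2" by (rule exhaust_2)
    then show ?thesis using L that by auto
  qed
  have coord: "\<exists>i. c $ i < d $ i \<or> d $ i < c $ i" if ne: "c \<noteq> d" for c d :: pt
  proof -
    obtain i where "c $ i \<noteq> d $ i" using ne by (auto simp: vec_eq_iff)
    then show ?thesis by (auto simp: neq_iff)
  qed
  have cmp: "\<bar>x $ i - y $ i\<bar> \<le> dist x y" for x y :: pt and i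
    using component_le_norm_cart[of "x - y" i] by (simp add: dist_norm)
  have d1: "dist c d \<ge> 1" if cd: "c \<in> C" "d \<in> C" "c \<noteq> d" for c d
  proof -
    obtain i where "c $ i < d $ i \<or> d $ i < c $ i" using coord cd(3) by blast
    moreover have "c $ i \<in> \<int>" "d $ i \<in> \<int>" using LI cd(1,2) by auto
    ultimately have "c $ i + 1 \<le> d $ i \<or> d $ i + 1 \<le> c $ i" using ints_gap by blast
    then have "\<bar>c $ i - d $ i\<bar> \<ge> 1" by linarith
    then show ?thesis using cmp[where x=c and y=d and i=i] by linarith
  qed
  have pack: "disk_packing C (1/2)"
    unfolding disk_packing_def
  proof (intro conjI ballI impI)
    fix c d assume cd: "c \<in> C" "d \<in> C" "c \<noteq> d"
    show "ball c (1/2) \<inter> ball d (1/2) = {}"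
    proof (rule ccontr)
      assume "ball c (1/2) \<inter> ball d (1/2) \<noteq> {}"
      then obtain z where "dist c z < 1/2" "dist d z < 1/2" by auto
      then have "dist c d < 1" using dist_triangle[of c d z] by (simp add: dist_commute)
      then show False using d1 cd by fastforce
    qed
  qed simp
  have sep: "\<exists>a b. a \<noteq> 0 \<and>
           (\<forall>x\<in>cball c (1/2). a \<bullet> x \<le> b) \<and> (\<forall>x\<in>cball d (1/2). a \<bullet> x \<ge> b) \<and>
           (\<forall>e\<in>C. ball e (1/2) \<inter> {x. a \<bullet> x = b} = {})"
    if cd: "c \<in> C" "d \<in> C" "c \<noteq> d" for c d
  proof -
    obtain i where "c $ i < d $ i \<or> d $ i < c $ i" using coord cd(3) by blast
    then show ?thesis
    proof
      assume lt: "c $ i < d $ i"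
      have "c $ i \<in> \<int>" "d $ i \<in> \<int>" using LI cd(1,2) by auto
      then have gap: "c $ i + 1 \<le> d $ i" using ints_gap lt by blast
      define a :: pt where "a = axis i 1"
      have ax: "a \<bullet> x = x $ i" for x unfolding a_def by (simp add: inner_axis')
      have "a \<noteq> 0" unfolding a_def by (simp add: axis_eq_0_iff)
      moreover have "\<forall>x\<in>cball c (1/2). a \<bullet> x \<le> c $ i + 1/2"
      proof
        fix x assume "x \<in> cball c (1/2)"
        then have h: "dist c x \<le> 1/2" by simp
        have "\<bar>c $ i - x $ i\<bar> \<le> dist c x" by (rule cmp)
        then show "a \<bullet> x \<le> c $ i + 1/2" unfolding ax using h by linarith
      qed
      moreover have "\<forall>x\<in>cball d (1/2). a \<bullet> x \<ge> c $ i + 1/2"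
      proof
        fix x assume "x \<in> cball d (1/2)"
        then have h: "dist d x \<le> 1/2" by simp
        have "\<bar>d $ i - x $ i\<bar> \<le> dist d x" by (rule cmp)
        then show "a \<bullet> x \<ge> c $ i + 1/2" unfolding ax using h gap by linarith
      qed
      moreover have "\<forall>e\<in>C. ball e (1/2) \<inter> {x. a \<bullet> x = c $ i + 1/2} = {}"
      proof (intro ballI equalityI subsetI)
        fix e x assume e: "e \<in> C" and x: "x \<in> ball e (1/2) \<inter> {x. a \<bullet> x = c $ i + 1/2}"
        then have "\<bar>e $ i - (c $ i + 1/2)\<bar> < 1/2" using cmp[where x=e and y=x and i=i] by (simp add: ax)
        then have "c $ i < e $ i" "e $ i < c $ i + 1" by linarith+
        moreover have "c $ i \<in> \<int>" "e $ i \<in> \<int>" using LI cd(1) e by auto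
        ultimately have False using ints_gap[of "c $ i" "e $ i"] by linarith
        then show "x \<in> {}" by simp
      qed simp
      ultimately show ?thesis by blast
    next
      assume lt: "d $ i < c $ i"
      have "c $ i \<in> \<int>" "d $ i \<in> \<int>" using LI cd(1,2) by auto
      then have gap: "d $ i + 1 \<le> c $ i" using ints_gap lt by blast
      define a :: pt where "a = axis i (-1)"
      have ax: "a \<bullet> x = - x $ i" for x unfolding a_def by (simp add: inner_axis')
      have "a \<noteq> 0" unfolding a_def by (simp add: axis_eq_0_iff)
      moreover have "\<forall>x\<in>cball c (1/2). a \<bullet> x \<le> - c $ i + 1/2"
      proof
        fix x assume "x \<in> cball c (1/2)"
        then have h: "dist c x \<le> 1/2" by simp
        have "\<bar>c $ i - x $ i\<bar> \<le> dist c x" by (rule cmp)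
        then show "a \<bullet> x \<le> - c $ i + 1/2" unfolding ax using h by linarith
      qed
      moreover have "\<forall>x\<in>cball d (1/2). a \<bullet> x \<ge> - c $ i + 1/2"
      proof
        fix x assume "x \<in> cball d (1/2)"
        then have h: "dist d x \<le> 1/2" by simp
        have "\<bar>d $ i - x $ i\<bar> \<le> dist d x" by (rule cmp)
        then show "a \<bullet> x \<ge> - c $ i + 1/2" unfolding ax using h gap by linarith
      qed
      moreover have "\<forall>e\<in>C. ball e (1/2) \<inter> {x. a \<bullet> x = - c $ i + 1/2} = {}"
      proof (intro ballI equalityI subsetI)
        fix e x assume e: "e \<in> C" and x: "x \<in> ball e (1/2) \<inter> {x. a \<bullet> x = - c $ i + 1/2}"
        then have xi: "x $ i = c $ i - 1/2" and de: "dist e x < 1/2" by (auto simp: ax)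
        then have "\<bar>e $ i - (c $ i - 1/2)\<bar> < 1/2" using cmp[where x=e and y=x and i=i] by simp
        then have "e $ i < c $ i" "c $ i < e $ i + 1" by linarith+
        moreover have "c $ i \<in> \<int>" "e $ i \<in> \<int>" using LI cd(1) e by auto
        ultimately have False using ints_gap[of "e $ i" "c $ i"] by linarith
        then show "x \<in> {}" by simp
      qed simp
      ultimately show ?thesis by blast
    qed
  qed
  show ?thesis unfolding totally_separable_def using pack sep by blast
qed



lemma sq_arith:
  fixes m q n :: int
  assumes "q * m \<le> n - 1" "n - 1 < (q + 1) * m" "(m - 1)^2 < n" "n \<le> m^2" "m \<ge> 2" "q \<ge> 0"
  shows "(m + q)^2 < 4 * n"
proof -
  have "q * m < m * m" using assms(1,4) by (simp add: power2_eq_square)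
  then have qm: "q < m" using assms(5) by (simp add: mult_less_cancel_right)
  show ?thesis
  proof (cases "q = m - 1")
    case True
    then have "(m - 1) * m \<le> n - 1" using assms(1) by simp
    moreover have "(m + q)^2 = 4 * (m * m) - 4 * m + 1"
    proof -
      have "m = q + 1" using True by simp
      then show ?thesis by (simp add: power2_eq_square algebra_simps)
    qed
    ultimately show ?thesis by (simp add: algebra_simps)
  next
    case False
    then have "m + q \<le> 2 * m - 2" using qm by simp
    then have "(m + q)^2 \<le> (2 * m - 2)^2" using assms(5,6) by (intro power_mono) auto
    also have "\<dots> = 4 * (m - 1)^2" by (simp add: power2_eq_square algebra_simps)
    also have "\<dots> < 4 * n" using assms(3) by simp
    finally show ?thesis .
  qed
qed

lemma construction:
  fixes n :: nat
  assumes n1: "n > 1"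
  shows "\<exists>C. finite C \<and> card C = n \<and> (\<forall>c\<in>C. c $ 1 \<in> \<int> \<and> c $ 2 \<in> \<int>) \<and>
    \<lfloor>2 * real n - 2 * sqrt (real n)\<rfloor> \<le> int (contact_number C (1/2))"
proof -
  define m where "m = (LEAST m. n \<le> m * m)"
  have ex: "\<exists>m. n \<le> m * m" by (rule exI[of _ n]) simp
  have nm: "n \<le> m * m" unfolding m_def using LeastI_ex[OF ex] .
  have m2: "m \<ge> 2"
  proof (rule ccontr)
    assume "\<not> m \<ge> 2"
    then have "m * m \<le> 1" by (cases m) auto
    then show False using nm n1 by simp
  qed
  have mlow: "(m - 1) * (m - 1) < n"
  proof -
    have "\<not> n \<le> (m - 1) * (m - 1)" unfolding m_def
      by (rule not_less_Least) (use m2 in \<open>simp add: m_def[symmetric]\<close>)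
    then show ?thesis by simp
  qed
  define Q where "Q = (n - 1) div m"
  have Q1: "Q * m \<le> n - 1" unfolding Q_def by (rule div_times_less_eq_dividend)
  have Q2: "n - 1 < (Q + 1) * m" unfolding Q_def using m2
    by (metis add.commute div_mult_mod_eq mod_less_divisor nat_add_left_cancel_less
        zero_less_iff_neq_zero not_numeral_le_zero mult_Suc plus_1_eq_Suc)
  have sq: "(int m + int Q)^2 < 4 * int n"
  proof (rule sq_arith)
    show "int Q * int m \<le> int n - 1" using Q1 n1 by (simp add: of_nat_mult[symmetric] of_nat_diff del: of_nat_mult)
    show "int n - 1 < (int Q + 1) * int m"
    proof -
      have "int (n - 1) < int ((Q + 1) * m)" using Q2 by (simp only: of_nat_less_iff)
      then show ?thesis using n1 by (simp add: of_nat_diff algebra_simps)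
    qed
    show "(int m - 1)^2 < int n"
    proof -
      have "int ((m - 1) * (m - 1)) < int n" using mlow by (simp only: of_nat_less_iff)
      moreover have "int ((m - 1) * (m - 1)) = (int m - 1)^2" using m2 by (simp add: of_nat_diff power2_eq_square)
      ultimately show ?thesis by simp
    qed
    show "int n \<le> (int m)^2" using nm by (simp add: power2_eq_square of_nat_mult[symmetric] del: of_nat_mult)
  qed (use m2 in auto)
  have mn: "m \<le> n"
  proof -
    have "(m - 1) * (m - 1) + 1 \<ge> m" using m2
      by (cases m; cases "m - 1"; simp)
    then show ?thesis using mlow by simp
  qed
  define P :: "nat \<Rightarrow> pt" where "P k = vector [real (k mod m), real (k div m)]" for k
  have P1: "P k $ 1 = real (k mod m)" and P2: "P k $ 2 = real (k div m)" for k
    by (simp_all add: P_def)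
  have injP: "inj P"
  proof (rule injI)
    fix k l assume "P k = P l"
    then have "P k $ 1 = P l $ 1" "P k $ 2 = P l $ 2" by simp_all
    then have "k mod m = l mod m" "k div m = l div m" by (simp_all add: P1 P2)
    then show "k = l" by (metis div_mult_mod_eq)
  qed
  have distP: "dist (P k) (P l) = sqrt ((real (k mod m) - real (l mod m))^2 + (real (k div m) - real (l div m))^2)" for k l
    by (simp add: dist_norm norm2 P1 P2)
  have tanP: "tangent (1/2) (P k) (P l)" if "dist (P k) (P l) = 1" for k l
    using that unfolding tangent_def by auto
  have hor: "dist (P k) (P (Suc k)) = 1" if "k mod m \<noteq> m - 1" for k
  proof -
    have "k mod m < m" using m2 by simp
    then have ne: "Suc (k mod m) \<noteq> m" using that by linarith
    then have "Suc k mod m = Suc (k mod m)" by (simp add: mod_Suc)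
    moreover have "Suc k div m = k div m" using ne by (simp add: div_Suc mod_Suc)
    ultimately show ?thesis unfolding distP by simp
  qed
  have ver: "dist (P k) (P (k + m)) = 1" for k
  proof -
    have "(k + m) mod m = k mod m" by simp
    moreover have "(k + m) div m = Suc (k div m)" using m2 by simp
    ultimately show ?thesis unfolding distP by simp
  qed
  define C0 where "C0 = P ` {..<n}"
  have finC0: "finite C0" unfolding C0_def by simp
  have cardC0: "card C0 = n" unfolding C0_def using injP
    by (simp add: card_image inj_on_subset)
  have latC0: "\<forall>c\<in>C0. c $ 1 \<in> \<int> \<and> c $ 2 \<in> \<int>"
    unfolding C0_def by (auto simp: P1 P2)
  define T where "T = {{c, d} | c d. c \<in> C0 \<and> d \<in> C0 \<and> tangent (1/2) c d}"
  have finT: "finite T"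
  proof -
    have "T \<subseteq> (\<lambda>(c, d). {c, d}) ` (C0 \<times> C0)" unfolding T_def by auto
    then show ?thesis using finC0 finite_subset by blast
  qed
  define I where "I = {k. Suc k < n \<and> k mod m \<noteq> m - 1}"
  define J where "J = {k. k < n - 1 \<and> k mod m = m - 1}"
  define K where "K = {k. k + m < n}"
  define HS where "HS = (\<lambda>k. {P k, P (Suc k)}) ` I"
  define VS where "VS = (\<lambda>k. {P k, P (k + m)}) ` K"
  have HT: "HS \<subseteq> T" unfolding HS_def T_def I_def C0_def using hor tanP by fastforce
  have VT: "VS \<subseteq> T" unfolding VS_def T_def K_def C0_def using ver tanP by fastforce
  have injH: "inj_on (\<lambda>k. {P k, P (Suc k)}) I"
  proof (rule inj_onI)
    fix k l assume "{P k, P (Suc k)} = {P l, P (Suc l)}"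
    then have "(k = l \<and> Suc k = Suc l) \<or> (k = Suc l \<and> Suc k = l)"
      using injP by (auto simp: doubleton_eq_iff dest: injD)
    then show "k = l" by auto
  qed
  have injV: "inj_on (\<lambda>k. {P k, P (k + m)}) K"
  proof (rule inj_onI)
    fix k l assume "{P k, P (k + m)} = {P l, P (l + m)}"
    then have "(k = l \<and> k + m = l + m) \<or> (k = l + m \<and> k + m = l)"
      using injP by (auto simp: doubleton_eq_iff dest: injD)
    then show "k = l" using m2 by auto
  qed
  have disj: "HS \<inter> VS = {}"
  proof -
    have False if "{P k, P (Suc k)} = {P l, P (l + m)}" for k l
    proof -
      have "(k = l \<and> Suc k = l + m) \<or> (k = l + m \<and> Suc k = l)"
        using that injP by (auto simp: doubleton_eq_iff dest: injD)
      then show False using m2 by auto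
    qed
    then show ?thesis unfolding HS_def VS_def by blast
  qed
  have cK: "card K = n - m"
  proof -
    have "K = {..<n - m}" unfolding K_def by auto
    then show ?thesis by simp
  qed
  have cJ: "card J \<le> Q"
  proof -
    have "inj_on (\<lambda>k. k div m) J"
    proof (rule inj_onI)
      fix k l assume "k \<in> J" "l \<in> J" "k div m = l div m"
      then have "k mod m = l mod m" "k div m = l div m" unfolding J_def by simp_all
      then show "k = l" by (metis div_mult_mod_eq)
    qed
    moreover have "(\<lambda>k. k div m) ` J \<subseteq> {..<Q}"
    proof
      fix x assume "x \<in> (\<lambda>k. k div m) ` J"
      then obtain k where k: "k \<in> J" "x = k div m" by blast
      have "k mod m = m - 1" using k(1) unfolding J_def by simp
      then have "k = k div m * m + (m - 1)" using div_mult_mod_eq[of k m] by simp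
      then have "(k div m + 1) * m = k + 1" using m2 by (simp add: algebra_simps)
      also have "\<dots> \<le> n - 1" using k(1) unfolding J_def by simp
      finally have "(k div m + 1) * m div m \<le> (n - 1) div m" by (rule div_le_mono)
      then have "k div m + 1 \<le> Q" unfolding Q_def using m2 by simp
      then show "x \<in> {..<Q}" using k(2) by simp
    qed
    ultimately have "card J \<le> card {..<Q}" by (intro card_inj_on_le) auto
    then show ?thesis by simp
  qed
  have cI: "n - 1 \<le> card I + Q"
  proof -
    have "{..<n - 1} \<subseteq> I \<union> J" unfolding I_def J_def by auto
    moreover have "finite I" by (rule finite_subset[of _ "{..<n}"]) (auto simp: I_def)
    moreover have "finite J" by (rule finite_subset[of _ "{..<n}"]) (auto simp: J_def)
    ultimately have "card {..<n - 1} \<le> card (I \<union> J)"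
      by (intro card_mono) auto
    also have "\<dots> \<le> card I + card J" by (rule card_Un_le)
    finally show ?thesis using cJ by simp
  qed
  have "card HS + card VS \<le> card T"
  proof -
    have "card HS + card VS = card (HS \<union> VS)"
      using disj finite_subset[OF HT finT] finite_subset[OF VT finT] by (simp add: card_Un_disjoint)
    also have "\<dots> \<le> card T" using HT VT finT by (intro card_mono) auto
    finally show ?thesis .
  qed
  moreover have "card HS = card I" unfolding HS_def using injH by (simp add: card_image)
  moreover have "card VS = card K" unfolding VS_def using injV by (simp add: card_image)
  ultimately have E: "(n - 1) + (n - m) \<le> card T + Q" using cI cK by simp
  have "real m + real Q < 2 * sqrt (real n)"
  proof -
    have "(real m + real Q)^2 < 4 * real n"
    proof -
      have "real_of_int ((int m + int Q)^2) < real_of_int (4 * int n)" using sq by (simp only: of_int_less_iff)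
      then show ?thesis by simp
    qed
    then have "real m + real Q < sqrt (4 * real n)" by (rule real_less_rsqrt)
    moreover have "sqrt (4 * real n) = 2 * sqrt (real n)" by (simp add: real_sqrt_mult)
    ultimately show ?thesis by simp
  qed
  moreover have "real (n - 1) + real (n - m) \<le> real (card T) + real Q"
    using E by (simp only: of_nat_add[symmetric] of_nat_le_iff)
  ultimately have "2 * real n - 2 * sqrt (real n) < real (card T) + 1"
    using n1 mn by (simp add: of_nat_diff)
  then have "\<lfloor>2 * real n - 2 * sqrt (real n)\<rfloor> \<le> int (card T)"
    by (simp add: floor_le_iff)
  then show ?thesis using finC0 cardC0 latC0 unfolding contact_number_def T_def by blast
qed

lemma max_eq:
  fixes S :: "nat set" and F :: int
  assumes up: "\<forall>x\<in>S. int x \<le> F" and wit: "\<exists>x\<in>S. F \<le> int x"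
  shows "int (Max S) = F"
proof -
  obtain x where x: "x \<in> S" "F \<le> int x" using wit by blast
  have "S \<subseteq> {..nat F}" using up by force
  then have fin: "finite S" by (rule finite_subset) simp
  have "Max S \<in> S" using fin x(1) by (intro Max_in) auto
  then have "int (Max S) \<le> F" using up by blast
  moreover have "x \<le> Max S" using fin x(1) by simp
  ultimately show ?thesis using x(2) by linarith
qed

theorem corollary1:
  fixes n :: nat
  assumes "n > 1"
  shows "c_Z2 n = c_TS n \<and> c_TS n = c_LS n \<and>
         int (c_LS n) = \<lfloor>2 * real n - 2 * sqrt (real n)\<rfloor>"
proof -
  define F where "F = \<lfloor>2 * real n - 2 * sqrt (real n)\<rfloor>"
  have upLS: "int (contact_number C r) \<le> F"
    if LS: "locally_separable C r" and fin: "finite C" and cn: "card C = n" for C r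
  proof -
    have "real (contact_number C r) \<le> 2 * real n - 2 * sqrt (real n)"
      using ls_upper[OF LS fin] cn by simp
    then show ?thesis unfolding F_def by (simp add: le_floor_iff)
  qed
  obtain C0 where C0: "finite C0" "card C0 = n" "\<forall>c\<in>C0. c $ 1 \<in> \<int> \<and> c $ 2 \<in> \<int>"
    and w: "F \<le> int (contact_number C0 (1/2))"
    using construction[OF assms] unfolding F_def by blast
  have TS0: "totally_separable C0 (1/2)" using lattice_ts[OF C0(3)] .
  have P0: "disk_packing C0 (1/2)" using TS0 unfolding totally_separable_def by simp
  have LS0: "locally_separable C0 (1/2)" using ts_ls[OF TS0] .
  have Z: "int (c_Z2 n) = F" unfolding c_Z2_def
  proof (rule max_eq)
    show "\<forall>x\<in>{contact_number C (1/2) | C. finite C \<and> card C = n \<and>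
      disk_packing C (1/2) \<and> (\<forall>c\<in>C. c $ 1 \<in> \<int> \<and> c $ 2 \<in> \<int>)}. int x \<le> F"
      using upLS ts_ls lattice_ts by blast
    show "\<exists>x\<in>{contact_number C (1/2) | C. finite C \<and> card C = n \<and>
      disk_packing C (1/2) \<and> (\<forall>c\<in>C. c $ 1 \<in> \<int> \<and> c $ 2 \<in> \<int>)}. F \<le> int x"
      using C0 P0 w by blast
  qed
  have T: "int (c_TS n) = F" unfolding c_TS_def
  proof (rule max_eq)
    show "\<forall>x\<in>{contact_number C r | C r. finite C \<and> card C = n \<and> totally_separable C r}. int x \<le> F"
      using upLS ts_ls by blast
    show "\<exists>x\<in>{contact_number C r | C r. finite C \<and> card C = n \<and> totally_separable C r}. F \<le> int x"
      using C0 TS0 w by blast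
  qed
  have L: "int (c_LS n) = F" unfolding c_LS_def
  proof (rule max_eq)
    show "\<forall>x\<in>{contact_number C r | C r. finite C \<and> card C = n \<and> locally_separable C r}. int x \<le> F"
      using upLS by blast
    show "\<exists>x\<in>{contact_number C r | C r. finite C \<and> card C = n \<and> locally_separable C r}. F \<le> int x"
      using C0 LS0 w by blast
  qed
  show ?thesis using Z T L unfolding F_def by simp
qed

end
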